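(* Let $a, b, n$ be positive integers with $b>1$, $n>1$ and $\gcd(r_b(n),a)=1$. Then the Frobenius number of $S_a(b,n)$ is \[\operatorname{F}(S_a(b,n)) = \begin{cases} (n-1)\,(b^n - 1 - a) + a\, r_b(n) & \text{if } a < b^n - 1,\\ b^n - 1 - a + a\, r_b(n) & \text{if } a > b^n - 1.\end{cases}\]
   Context: For $\ell \ge 1$, $r_b(\ell) = \sum_{j=0}^{\ell-1} b^j$, and $r_b(0)=0$. For $i \ge 1$, $a_i := r_b(n) + a\, r_b(i-1)$; $S_a(b,n)$ is the numerical semigroup generated by $\{a_i : i\ge 1\}$. The Frobenius number $\operatorname{F}(S)$ of a numerical semigroup $S$ is the largest integer not in $S$. *)

theory Defs
  imports Main
begin

definition rb :: "nat \<Rightarrow> nat \<Rightarrow> nat" where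
  "rb b l = (\<Sum>j<l. b ^ j)"

definition gen_a :: "nat \<Rightarrow> nat \<Rightarrow> nat \<Rightarrow> nat \<Rightarrow> nat" where
  "gen_a a b n i = rb b n + a * rb b (i - 1)"

inductive_set monoid_gen :: "nat set \<Rightarrow> nat set" for A :: "nat set" where
  zero: "0 \<in> monoid_gen A"
| add: "x \<in> monoid_gen A \<Longrightarrow> y \<in> A \<Longrightarrow> x + y \<in> monoid_gen A"

definition S_a :: "nat \<Rightarrow> nat \<Rightarrow> nat \<Rightarrow> nat set" where
  "S_a a b n = monoid_gen {gen_a a b n i | i. i \<ge> 1}"

definition frobenius :: "nat set \<Rightarrow> int" where
  "frobenius S = (GREATEST z::int. z \<notin> int ` S)"

end

theory Submission
  imports Defs
begin


function ds :: "nat \<Rightarrow> nat \<Rightarrow> nat" where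
  "ds b y = (if b < 2 \<or> y = 0 then 0 else y mod b + ds b (y div b))"
  by auto
termination by (relation "measure snd") auto

declare ds.simps[simp del]

lemma ds0[simp]: "ds b 0 = 0" by (simp add: ds.simps)

lemma ds_step: assumes "b \<ge> 2" "d < b" shows "ds b (b*q + d) = d + ds b q"
proof (cases "b*q + d = 0")
  case True then show ?thesis using assms by (simp add: ds.simps)
next
  case False then show ?thesis using assms by (subst ds.simps) simp
qed

lemma ds_split: assumes "b \<ge> 2" shows "ds b y = y mod b + ds b (y div b)"
  using ds_step[OF assms, of "y mod b" "y div b"] assms by simp

lemma ds_le: assumes "b \<ge> 2" shows "ds b y \<le> y"
proof (induction y rule: less_induct)
  case (less y)
  show ?case
  proof (cases "y = 0")
    case False
    have "y div b < y" using False assms by simp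
    then have "ds b (y div b) \<le> y div b" using less by blast
    moreover have "y div b \<le> b * (y div b)" using assms by simp
    moreover have "y mod b + b * (y div b) = y" by simp
    ultimately show ?thesis using ds_split[OF assms, of y] by linarith
  qed simp
qed

lemma ds_le2: assumes "b \<ge> 2" shows "ds b y \<le> y mod b + y div b"
  using ds_split[OF assms, of y] ds_le[OF assms, of "y div b"] by simp

lemma ds_cong: assumes "b \<ge> 2" shows "(b - 1) dvd (y - ds b y)"
proof (induction y rule: less_induct)
  case (less y)
  show ?case
  proof (cases "y = 0")
    case False
    have "y div b < y" using False assms by simp
    then have h: "(b - 1) dvd (y div b - ds b (y div b))" using less by blast
    have le: "ds b (y div b) \<le> y div b" using ds_le[OF assms] .
    have "y - ds b y = (b - 1) * (y div b) + (y div b - ds b (y div b))"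
    proof -
      have "y = b * (y div b) + y mod b" by simp
      moreover have "b * (y div b) = (b - 1) * (y div b) + y div b" 
      proof -
        have "(b-1)*(y div b) = b*(y div b) - y div b" by (simp add: diff_mult_distrib)
        moreover have "y div b \<le> b * (y div b)" using assms by simp
        ultimately show ?thesis by linarith
      qed
      ultimately show ?thesis using ds_split[OF assms, of y] le by linarith
    qed
    then show ?thesis using h by simp
  qed simp
qed

lemma ds_suc: assumes "b \<ge> 2" shows "ds b (z + 1) \<le> ds b z + 1"
proof (induction z rule: less_induct)
  case (less z)
  show ?case
  proof (cases "z mod b + 1 < b")
    case True
    have e: "z + 1 = b * (z div b) + (z mod b + 1)" by simp
    have "ds b (z+1) = z mod b + 1 + ds b (z div b)" by (subst e) (rule ds_step[OF assms True])
    then show ?thesis using ds_split[OF assms, of z] by simp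
  next
    case False
    have "z mod b < b" using assms by simp
    then have d: "z mod b = b - 1" using False by linarith
    have zpos: "z > 0" using d assms by (cases "z = 0") auto
    have "z + 1 = b * (z div b + 1) + 0"
    proof -
      have "b*(z div b + 1) = b*(z div b) + b" by simp
      moreover have "b*(z div b) + z mod b = z" by simp
      ultimately show ?thesis using d assms by linarith
    qed
    then have "ds b (z+1) = ds b (z div b + 1)" using ds_step[OF assms, of 0 "z div b + 1"] assms by simp
    also have "\<dots> \<le> ds b (z div b) + 1" using less zpos assms by simp
    finally show ?thesis using ds_split[OF assms, of z] by simp
  qed
qed

lemma ds_add: assumes "b \<ge> 2" shows "ds b (y + z) \<le> ds b y + ds b z"
proof (induction y arbitrary: z rule: less_induct)
  case (less y)
  show ?case
  proof (cases "y = 0")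
    case False
    define q1 where "q1 = y div b"
    define d1 where "d1 = y mod b"
    define q2 where "q2 = z div b"
    define d2 where "d2 = z mod b"
    have q1: "q1 < y" using False assms q1_def by simp
    have d1: "d1 < b" "d2 < b" using assms d1_def d2_def by auto
    have y: "y = b*q1 + d1" "z = b*q2 + d2" using q1_def d1_def q2_def d2_def by simp_all
    have dsy: "ds b y = d1 + ds b q1" "ds b z = d2 + ds b q2" using y ds_step[OF assms] d1 by auto
    show ?thesis
    proof (cases "d1 + d2 < b")
      case True
      have "y + z = b*(q1+q2) + (d1+d2)" using y by (simp add: algebra_simps)
      then have "ds b (y+z) = d1 + d2 + ds b (q1+q2)" using ds_step[OF assms True] by simp
      then show ?thesis using less[OF q1, of q2] dsy by simp
    next
      case False
      have e: "y + z = b*(q1+(q2+1)) + (d1+d2-b)" using y False by (simp add: algebra_simps)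
      have "d1 + d2 - b < b" using d1 by simp
      then have "ds b (y+z) = d1 + d2 - b + ds b (q1+(q2+1))" by (subst e) (rule ds_step[OF assms])
      moreover have "ds b (q1+(q2+1)) \<le> ds b q1 + ds b (q2+1)" using less[OF q1] .
      moreover have "ds b (q2+1) \<le> ds b q2 + 1" using ds_suc[OF assms] .
      ultimately show ?thesis using dsy False d1 by linarith
    qed
  qed simp
qed

lemma ds_pow: assumes "b \<ge> 2" shows "ds b (b^e) = 1"
proof (induction e)
  case 0 then show ?case using ds_step[OF assms, of 1 0] assms by simp
next
  case (Suc e) then show ?case using ds_step[OF assms, of 0 "b^e"] assms by simp
qed

lemma ds_blocks: assumes "b \<ge> 2" "w < b^n" shows "ds b (q * b^n + w) = ds b q + ds b w"
  using assms(2)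
proof (induction n arbitrary: q w)
  case 0 then show ?case by simp
next
  case (Suc n)
  have w1: "w div b < b^n" using Suc.prems assms
    by (simp add: less_mult_imp_div_less mult.commute)
  have "q * b^Suc n + w = b * (q * b^n + w div b) + w mod b" by (simp add: algebra_simps)
  then have "ds b (q * b^Suc n + w) = w mod b + ds b (q * b^n + w div b)"
    using ds_step[OF assms(1)] assms(1) by simp
  also have "\<dots> = w mod b + ds b q + ds b (w div b)" using Suc.IH[OF w1] by simp
  finally show ?case using ds_split[OF assms(1), of w] by simp
qed

lemma ds_compl: assumes "b \<ge> 2" "z \<le> b^n - 1" shows "ds b (b^n - 1 - z) + ds b z = n*(b-1)"
  using assms(2)
proof (induction n arbitrary: z)
  case 0 then show ?case by simp
next
  case (Suc n)
  have bn: "b^n \<ge> 1" using assms by simp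
  have z1: "z div b \<le> b^n - 1"
  proof -
    have "z < b^Suc n" 
    proof -
      have "b^Suc n > 0" using assms by simp
      then show ?thesis using Suc.prems by linarith
    qed
    then have "z div b < b^n" by (simp add: less_mult_imp_div_less mult.commute)
    then show ?thesis by simp
  qed
  have dlt: "z mod b < b" using assms by simp
  have "b^Suc n - 1 - z = b * (b^n - 1 - z div b) + (b - 1 - z mod b)"
  proof -
    have "z = b * (z div b) + z mod b" by simp
    moreover have "b * (b^n - 1 - z div b) = b^Suc n - b - b*(z div b)" by (simp add: algebra_simps)
    moreover have "b * (z div b) \<le> b * (b^n - 1)" using z1 by simp
    moreover have "b * (b^n - 1) = b^Suc n - b" by (simp add: algebra_simps)
    moreover have "b \<le> b^Suc n" using bn by simp
    ultimately show ?thesis using dlt by linarith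
  qed
  then have "ds b (b^Suc n - 1 - z) = (b - 1 - z mod b) + ds b (b^n - 1 - z div b)"
    using ds_step[OF assms(1)] assms(1) by simp
  moreover have "ds b z = z mod b + ds b (z div b)" using ds_split[OF assms(1)] .
  ultimately show ?case using Suc.IH[OF z1] dlt by simp
qed



lemma rb_Suc: "rb b (Suc l) = rb b l + b^l" by (simp add: rb_def)

lemma rb_pow: assumes "b \<ge> 1" shows "(b-1)*rb b l + 1 = b^l"
proof (induction l)
  case 0 then show ?case by (simp add: rb_def)
next
  case (Suc l)
  have "(b-1)*rb b (Suc l) + 1 = (b-1)*rb b l + 1 + (b-1)*b^l" by (simp add: rb_Suc algebra_simps)
  also have "\<dots> = b^l + (b-1)*b^l" using Suc by simp
  also have "\<dots> = b^Suc l" using assms by (simp add: algebra_simps diff_mult_distrib)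
  finally show ?case .
qed

lemma rb_Suc2: "rb b (Suc l) = 1 + b * rb b l"
proof (induction l)
  case 0 then show ?case by (simp add: rb_def)
next
  case (Suc l)
  have "rb b (Suc (Suc l)) = rb b (Suc l) + b^Suc l" by (rule rb_Suc)
  also have "\<dots> = 1 + b * rb b l + b * b^l" using Suc by simp
  also have "\<dots> = 1 + b * (rb b l + b^l)" by (simp add: distrib_left)
  finally show ?case by (simp add: rb_Suc)
qed

lemma rb_ge: assumes "b \<ge> 2" shows "2*l \<le> rb b l + 2"
proof (induction l)
  case 0 then show ?case by simp
next
  case (Suc l)
  have "rb b (Suc l) = 1 + b * rb b l"
    by (rule rb_Suc2)
  moreover have "b * rb b l \<ge> 2 * rb b l" using assms by simp
  moreover have "rb b l \<ge> l" proof (induction l) case 0 then show ?case by simp next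
    case (Suc l)
    have "b^l \<ge> 1" using assms by simp
    then show ?case using Suc rb_Suc[of b l] by simp qed
  ultimately have "2*l+2 \<le> rb b (Suc l) + 2" by linarith
  then show ?case by simp
qed

inductive pw :: "nat \<Rightarrow> nat \<Rightarrow> nat \<Rightarrow> bool" for b where
  pw0: "pw b 0 0"
| pwS: "pw b m y \<Longrightarrow> pw b (Suc m) (y + b^e)"

lemma pw_le: assumes "b \<ge> 1" "pw b m y" shows "m \<le> y"
  using assms(2)
proof induction
  case (pwS m y e)
  have "b^e \<ge> 1" using assms(1) by simp
  then show ?case using pwS by linarith
qed simp

lemma pw_mult: "pw b m y \<Longrightarrow> pw b m (b*y)"
proof (induction rule: pw.induct)
  case pw0 then show ?case using pw.pw0 by simp
next
  case (pwS m y e) then show ?case using pw.pwS[of b m "b*y" "Suc e"] by (simp add: algebra_simps)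
qed

lemma pw_addc: "pw b m y \<Longrightarrow> pw b (m + c) (y + c * b^e)"
proof (induction c)
  case 0 then show ?case by simp
next
  case (Suc c) then show ?case using pw.pwS[of b "m+c" "y + c*b^e" e] by (simp add: algebra_simps)
qed

lemma pw_ds: assumes "b \<ge> 2" shows "pw b (ds b y) y"
proof (induction y rule: less_induct)
  case (less y)
  show ?case
  proof (cases "y = 0")
    case True then show ?thesis using pw0 by simp
  next
    case False
    then have "y div b < y" using assms by simp
    then have "pw b (ds b (y div b)) (b * (y div b))" using less pw_mult by blast
    then have "pw b (ds b (y div b) + y mod b) (b * (y div b) + y mod b * b^0)" by (rule pw_addc)
    then show ?thesis using ds_split[OF assms, of y] by (simp add: add.commute)
  qed
qed

lemma pw_split: assumes "b \<ge> 1" "pw b m y" "m < y" shows "pw b (m + (b-1)) y"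
  using assms(2,3)
proof (induction rule: pw.induct)
  case pw0 then show ?case by simp
next
  case (pwS m y e)
  show ?case
  proof (cases e)
    case 0
    then have "m < y" using pwS.prems by simp
    then have "pw b (m + (b-1)) y" using pwS.IH by simp
    then show ?thesis using pw.pwS[of b "m+(b-1)" y 0] 0 by simp
  next
    case (Suc f)
    have "pw b (m + b) (y + b * b^f)" using pw_addc[OF pwS.hyps, of b f] .
    then show ?thesis using Suc assms(1) by simp
  qed
qed

lemma pw_many: assumes "b \<ge> 2" "ds b y + t*(b-1) \<le> y" shows "pw b (ds b y + t*(b-1)) y"
  using assms(2)
proof (induction t)
  case 0 then show ?case using pw_ds[OF assms(1)] by simp
next
  case (Suc t)
  have h: "pw b (ds b y + t*(b-1)) y" using Suc by simp
  have "ds b y + t*(b-1) < y" using Suc.prems assms(1) by simp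
  then have "pw b (ds b y + t*(b-1) + (b-1)) y" using pw_split[OF _ h] assms by simp
  then show ?case by (simp add: ac_simps)
qed

lemma gen_in: "i \<ge> 1 \<Longrightarrow> x \<in> S_a a b n \<Longrightarrow> x + gen_a a b n i \<in> S_a a b n"
  unfolding S_a_def by (rule monoid_gen.add) auto

lemma pw_mem: assumes "b \<ge> 2" "pw b m y" shows "\<And>N. y = (b-1)*N + m \<Longrightarrow> m*rb b n + a*N \<in> S_a a b n"
  using assms(2)
proof (induction rule: pw.induct)
  case pw0
  then have "N = 0" using assms by simp
  then show ?case unfolding S_a_def using monoid_gen.zero by simp
next
  case (pwS m y e N)
  have yle: "m \<le> y" using pw_le[of b m y] pwS.hyps assms by simp
  have r: "(b-1)*rb b e + 1 = b^e" using rb_pow assms by simp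
  have "(b-1)*N = y - m + (b-1)*rb b e" using pwS.prems r yle by simp
  then have "(b-1)*N \<ge> (b-1) * rb b e" by simp
  then have ge: "N \<ge> rb b e" using assms by simp
  define N' where "N' = N - rb b e"
  have "(b-1)*N = (b-1)*N' + (b-1)*rb b e" using ge N'_def by (simp add: diff_mult_distrib2)
  then have "y = (b-1)*N' + m" using pwS.prems r yle by simp
  then have "m*rb b n + a*N' \<in> S_a a b n" using pwS.IH by simp
  then have "m*rb b n + a*N' + gen_a a b n (Suc e) \<in> S_a a b n" by (rule gen_in[rotated]) simp
  moreover have "m*rb b n + a*N' + gen_a a b n (Suc e) = Suc m * rb b n + a * N"
  proof -
    have NN: "N = N' + rb b e" using ge N'_def by simp
    show ?thesis unfolding NN by (simp add: gen_a_def algebra_simps)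
  qed
  ultimately show ?case by simp
qed

lemma mem_suff: assumes "b \<ge> 2" "ds b ((b-1)*N + k) \<le> k" shows "k*rb b n + a*N \<in> S_a a b n"
proof -
  define y where "y = (b-1)*N + k"
  have dle: "ds b y \<le> k" using assms(2) unfolding y_def .
  have kle: "k \<le> y" unfolding y_def by simp
  have c: "(b-1) dvd (y - ds b y)" using ds_cong[OF assms(1)] .
  have "y - ds b y = (b-1)*N + (k - ds b y)" using dle unfolding y_def by linarith
  then have "(b-1) dvd ((b-1)*N + (k - ds b y))" using c by simp
  then have "(b-1) dvd (k - ds b y)" using dvd_add_right_iff[of "b-1" "(b-1)*N" "k - ds b y"] by simp
  then obtain t where t: "k - ds b y = (b-1)*t" by blast
  then have k: "k = ds b y + t*(b-1)" using dle by (simp add: mult.commute)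
  have "pw b (ds b y + t*(b-1)) y" by (rule pw_many[OF assms(1)]) (use k kle in simp)
  then have "pw b k y" using k by simp
  then show ?thesis using pw_mem[OF assms(1), of k y N] y_def by blast
qed

lemma mem_nec: assumes "b \<ge> 2" "x \<in> S_a a b n"
  shows "\<exists>k N. x = k*rb b n + a*N \<and> ds b ((b-1)*N + k) \<le> k"
  using assms(2) unfolding S_a_def
proof (induction rule: monoid_gen.induct)
  case zero show ?case by (rule exI[of _ 0], rule exI[of _ 0]) simp
next
  case (add x y)
  obtain k N where kn: "x = k*rb b n + a*N" "ds b ((b-1)*N + k) \<le> k" using add.IH by blast
  obtain i where i: "i \<ge> 1" "y = gen_a a b n i" using add.hyps by blast
  have r: "(b-1)*rb b (i-1) + 1 = b^(i-1)" by (rule rb_pow) (use assms in simp)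
  have e: "(b-1)*(N + rb b (i-1)) + (k+1) = ((b-1)*N + k) + b^(i-1)" using r by (simp add: distrib_left)
  have "ds b ((b-1)*(N + rb b (i-1)) + (k+1)) \<le> ds b ((b-1)*N + k) + ds b (b^(i-1))"
    unfolding e by (rule ds_add[OF assms(1)])
  then have "ds b ((b-1)*(N + rb b (i-1)) + (k+1)) \<le> k+1" using kn(2) ds_pow[OF assms(1), of "i-1"] by linarith
  moreover have "x + y = (k+1)*rb b n + a*(N + rb b (i-1))" unfolding kn(1) i(2) gen_a_def by (simp add: algebra_simps)
  ultimately show ?case by blast
qed



lemma frob_char: fixes S :: "nat set" and F :: nat
  assumes "F \<notin> S" "\<And>x. x > F \<Longrightarrow> x \<in> S" shows "frobenius S = int F"
  unfolding frobenius_def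
proof (rule Greatest_equality)
  show "int F \<notin> int ` S" using assms(1) by auto
next
  fix y :: int assume y: "y \<notin> int ` S"
  show "y \<le> int F"
  proof (rule ccontr)
    assume "\<not> y \<le> int F"
    then have "nat y > F" "y = int (nat y)" by auto
    then have "nat y \<in> S" using assms(2) by blast
    then have "int (nat y) \<in> int ` S" by blast
    then show False using y \<open>y = int (nat y)\<close> by simp
  qed
qed

lemma low: fixes r a N0 K0 k N :: nat
  assumes "gcd r a = 1" "N0 < r" "K0*r + a*N0 = k*r + a*N"
  shows "\<exists>j. N = N0 + j*r \<and> k + a*j = K0"
proof -
  have cop: "coprime (int r) (int a)" using assms(1) coprime_int_iff coprime_iff_gcd_eq_1 by blast
  have e: "int a * (int N - int N0) = int r * (int K0 - int k)"
    using arg_cong[OF assms(3), of int] by (simp add: algebra_simps)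
  then have "int r dvd int a * (int N - int N0)" by simp
  then have "int r dvd (int N - int N0)" using cop coprime_dvd_mult_right_iff by blast
  then obtain j where j: "int N - int N0 = int r * j" by blast
  have jnn: "j \<ge> 0"
  proof (rule ccontr)
    assume "\<not> j \<ge> 0"
    then have "j \<le> -1" by simp
    then have "int r * j \<le> int r * (-1)" by (rule mult_left_mono) simp
    then show False using j assms(2) by linarith
  qed
  define jn where "jn = nat j"
  have jj: "j = int jn" using jnn jn_def by simp
  have "int N = int (N0 + jn*r)" using j jj by (simp add: algebra_simps)
  then have "N = N0 + jn*r" by (simp only: of_nat_eq_iff)
  moreover have "int K0 = int k + int a * int jn"
  proof -
    have "int r > 0" using assms(2) by simp
    moreover have "int r * (int K0 - int k) = int r * (int a * int jn)" using e j jj by (simp add: algebra_simps)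
    ultimately show ?thesis by simp
  qed
  then have "int K0 = int (k + a*jn)" by simp
  then have "K0 = k + a*jn" by (simp only: of_nat_eq_iff)
  ultimately show ?thesis by blast
qed

lemma up: fixes r a x :: nat
  assumes "gcd r a = 1" "a > 0" "r > 0" "x \<ge> a*(r-1)"
  shows "\<exists>k N. N < r \<and> x = k*r + a*N"
proof -
  obtain u v where uv: "a*u = r*v + gcd a r" using bezout_nat[of a r] assms(2) by auto
  then have uv: "a*u = r*v + 1" using assms(1) by (simp add: gcd.commute)
  define N where "N = (u*x) mod r"
  have Nlt: "N < r" using assms(3) N_def by simp
  have "(a*N) mod r = (a*(u*x)) mod r" unfolding N_def by (simp add: mod_mult_right_eq)
  also have "a*(u*x) = r*(v*x) + x"
  proof -
    have "a*(u*x) = (a*u)*x" by (simp add: mult.assoc)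
    also have "\<dots> = (r*v+1)*x" using uv by simp
    also have "\<dots> = r*(v*x) + x" by (simp add: algebra_simps)
    finally show ?thesis .
  qed
  finally have m: "(a*N) mod r = x mod r" by simp
  have "N \<le> r - 1" using Nlt by simp
  then have "a*N \<le> a*(r-1)" by (rule mult_left_mono) simp
  then have le: "a*N \<le> x" using assms(4) by linarith
  then have "r dvd x - a*N" using mod_eq_dvd_iff_nat[OF le, of r] m by simp
  then obtain k where "x - a*N = r*k" by blast
  then have "x = k*r + a*N" using le by (simp add: mult.commute)
  then show ?thesis using Nlt by blast
qed

lemma lemU: fixes b n r N k y :: nat
  assumes "b \<ge> 2" "N \<le> r" "b^n = (b-1)*r + 1" "y = (b-1)*N + k" "y \<ge> b^n"
  shows "ds b y \<le> k"
proof -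
  have "(b-1)*N \<le> (b-1)*r" using assms(2) by simp
  then have w: "y - b^n \<le> k - 1" "k \<ge> 1" using assms by linarith+
  have "ds b y = ds b (b^n + (y - b^n))" using assms(5) by simp
  also have "\<dots> \<le> ds b (b^n) + ds b (y - b^n)" by (rule ds_add[OF assms(1)])
  also have "\<dots> \<le> 1 + (y - b^n)" using ds_pow[OF assms(1)] ds_le[OF assms(1)] by simp
  finally show ?thesis using w by linarith
qed



lemma dsu: fixes b a j u :: nat
  assumes "b \<ge> 2" "a \<ge> 1" "u = a*j + j" shows "ds b u < (b-1) + a*j"
proof -
  define q where "q = u div b"
  define d where "d = u mod b"
  have u: "u = b*q + d" unfolding q_def d_def by simp
  have dlt: "d < b" unfolding d_def using assms(1) by simp
  have dsl: "ds b u \<le> d + q" using ds_le2[OF assms(1), of u] q_def d_def by simp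
  have bq: "b*q = (b-1)*q + q" using assms(1) by (simp add: diff_mult_distrib)
  have h1: "b*q + b > u" using u dlt by simp
  have aj: "a*j \<ge> j" using assms(2) by simp
  have h2: "2*((b-1)*q) + 2*(b-1) \<ge> b*q + b"
  proof -
    have "2*(b-1) \<ge> b" using assms(1) by simp
    then have "(2*(b-1))*(q+1) \<ge> b*(q+1)" by (rule mult_right_mono) simp
    then show ?thesis by (simp add: algebra_simps)
  qed
  have "(b-1)*q + (b-1) > j" using h1 h2 aj assms(3) by linarith
  then show ?thesis using dsl u bq assms(3) by linarith
qed

lemma case1: fixes a b n :: nat
  assumes b2: "b \<ge> 2" and n2: "n \<ge> 2" and a0: "a > 0" and g: "gcd (rb b n) a = 1"
    and alt: "a < (b-1)*rb b n"
  shows "frobenius (S_a a b n) = int ((n-1)*(b-1)*rb b n + a*(rb b n - n + 1))"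
proof -
  define r where "r = rb b n"
  define B where "B = b - 1"
  have B1: "B \<ge> 1" using b2 B_def by simp
  have bn: "b^n = B*r + 1" using rb_pow[of b n] b2 unfolding r_def B_def by simp
  have rge: "2*n \<le> r + 2" using rb_ge[OF b2] r_def by simp
  have rn: "r \<ge> n" using rge n2 by linarith
  have g': "gcd r a = 1" using g r_def by simp
  have nB: "n*B = (n-1)*B + B" using n2 by (simp add: diff_mult_distrib)
  define F where "F = (n-1)*B*r + a*(r - n + 1)"
  have "frobenius (S_a a b n) = int F"
  proof (rule frob_char)
    show "F \<notin> S_a a b n"
    proof
      assume "F \<in> S_a a b n"
      then obtain k N where kN: "F = k*rb b n + a*N" "ds b ((b-1)*N + k) \<le> k"
        using mem_nec[OF b2] by blast
      have kN': "F = k*r + a*N" "ds b (B*N + k) \<le> k" using kN r_def B_def by auto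
      have "((n-1)*B)*r + a*(r-n+1) = k*r + a*N" using kN'(1) F_def by simp
      moreover have "r - n + 1 < r" using rn n2 by linarith
      ultimately obtain j where j: "N = (r-n+1) + j*r" "k + a*j = (n-1)*B"
        using low[OF g'] by blast
      define y where "y = B*N + k"
      have dsy: "ds b y \<le> k" using kN'(2) y_def by simp
      show False
      proof (cases "j = 0")
        case True
        then have "y = B*(r - n + 1) + B*(n-1)" using j y_def by (simp add: mult.commute)
        also have "\<dots> = B*(r - n + 1 + (n-1))" by (simp add: distrib_left)
        also have "r - n + 1 + (n-1) = r" using rn n2 by linarith
        finally have "y = b^n - 1 - 0" using bn by simp
        then have "ds b y + ds b 0 = n*(b-1)" using ds_compl[OF b2, of 0 n] by simp
        then have "ds b y = n*B" using B_def by simp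
        then show False using dsy j True nB B1 by linarith
      next
        case False
        define u where "u = a*j + j"
        have ajle: "a*j \<le> (n-1)*B" using j by linarith
        have "u \<le> 2*(a*j)" using u_def a0 by simp
        also have "\<dots> \<le> 2*((n-1)*B)" using ajle by simp
        also have "\<dots> = B*(2*n - 2)" by (simp add: algebra_simps diff_mult_distrib)
        also have "\<dots> \<le> B*r" using rge by (intro mult_left_mono) linarith+
        finally have ule: "u \<le> b^n - 1" using bn by simp
        have yeq: "y = j*b^n + (b^n - 1 - u)"
        proof -
          have n1: "int (n-1) = int n - 1" using n2 by simp
          have "int k + int a*int j = int (n-1) * int B" using arg_cong[OF j(2), of int] by simp
          then have i1: "int k = (int n - 1)*int B - int a*int j" unfolding n1 by linarith
          have i2: "int N = int r - int n + 1 + int j*int r" using j(1) rn by (simp add: of_nat_diff)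
          have i3: "int (b^n) = int B*int r + 1" using bn by simp
          have i5: "int u = int a*int j + int j" unfolding u_def by simp
          have i4: "int (b^n - 1 - u) = int (b^n) - 1 - int u" using ule bn by (simp add: of_nat_diff)
          have "int y = int (j*b^n + (b^n - 1 - u))"
            unfolding y_def of_nat_add of_nat_mult i4 i1 i2 i3 i5 by (simp add: algebra_simps)
          then show ?thesis by (simp only: of_nat_eq_iff)
        qed
        have wlt: "b^n - 1 - u < b^n" using bn by simp
        have "ds b y = ds b j + ds b (b^n - 1 - u)" unfolding yeq by (rule ds_blocks[OF b2 wlt])
        moreover have "ds b (b^n - 1 - u) + ds b u = n*B" using ds_compl[OF b2 ule] B_def by simp
        moreover have "ds b u < B + a*j" using dsu[OF b2 _ u_def] a0 B_def by simp
        ultimately show False using dsy j nB by linarith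
      qed
    qed
  next
    fix x assume x: "x > F"
    have "a*(r-1) \<le> F"
    proof -
      have "r - 1 = (r-n+1) + (n-2)" using rn n2 by linarith
      then have "a*(r-1) = a*(r-n+1) + a*(n-2)" by (metis distrib_left)
      moreover have "a*(n-2) \<le> (B*r)*(n-2)" using alt B_def r_def by (intro mult_right_mono) auto
      moreover have "(B*r)*(n-2) \<le> (n-1)*B*r" by (simp add: algebra_simps)
      ultimately show ?thesis unfolding F_def by linarith
    qed
    then have "x \<ge> a*(r-1)" using x by simp
    moreover have "r > 0" using rn n2 by simp
    ultimately obtain k N where kN: "N < r" "x = k*r + a*N" using up[OF g' a0] by blast
    define y where "y = B*N + k"
    have "ds b y \<le> k"
    proof (cases "y \<ge> b^n")
      case True
      then show ?thesis using lemU[OF b2, of N r n "y" k] kN bn B_def y_def by simp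
    next
      case False
      have yle: "y \<le> b^n - 1" using False by simp
      define z where "z = b^n - 1 - y"
      have compl: "ds b z + ds b y = n*B" using ds_compl[OF b2 yle] B_def z_def by simp
      have "B dvd (z - ds b z)" using ds_cong[OF b2] B_def by simp
      then obtain t1 where t1: "z - ds b z = B*t1" by blast
      have dszle: "ds b z \<le> z" by (rule ds_le[OF b2])
      have sum: "ds b z + k + B*t1 + B*N = B*r" using t1 dszle z_def y_def yle bn by linarith
      define m where "m = r - N - t1"
      have "B*m = B*r - B*N - B*t1" unfolding m_def by (simp add: diff_mult_distrib2 distrib_left)
      then have mm: "ds b z + k = B*m" using sum by linarith
      have kbig: "k \<ge> (n-1)*B + 1"
      proof (rule ccontr)
        assume "\<not> ?thesis"
        then have kle: "k \<le> (n-1)*B" by simp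
        define D where "D = (n-1)*B - k"
        have kD: "(n-1)*B = k + D" using kle D_def by simp
        have "k*r + a*N > (k + D)*r + a*(r-n+1)" using x kN(2) kD unfolding F_def by simp
        then have ineq: "a*N > D*r + a*(r-n+1)" by (simp add: algebra_simps)
        have Ngt: "N > r - n + 1"
        proof (rule ccontr)
          assume "\<not> ?thesis"
          then have "N \<le> r-n+1" by simp
          then have "a*N \<le> a*(r-n+1)" by (rule mult_left_mono) simp
          then show False using ineq by linarith
        qed
        define M where "M = N - (r-n+1)"
        have NM: "N = (r-n+1) + M" "M > 0" using Ngt M_def by auto
        have "a*M > D*r" using ineq NM(1) by (simp add: algebra_simps)
        moreover have "a*M < (B*r)*M" using alt NM(2) B_def r_def by (intro mult_strict_right_mono) auto
        moreover have "(B*r)*M = (B*M)*r" by (simp add: ac_simps)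
        ultimately have "D*r < (B*M)*r" by linarith
        then have DBM: "D < B*M" by simp
        have "y = B*(r-n+1) + B*M + k" using y_def NM(1) by (simp add: distrib_left)
        moreover have "B*(r-n+1) + (n-1)*B = B*r"
        proof -
          have "B*(r-n+1) + B*(n-1) = B*(r-n+1+(n-1))" by (simp add: distrib_left)
          also have "r-n+1+(n-1) = r" using rn n2 by linarith
          finally show ?thesis by (simp add: mult.commute)
        qed
        ultimately have "y \<ge> B*r + 1" using kD DBM by linarith
        then show False using False bn by simp
      qed
      have "(n-1)*B = B*(n-1)" by (simp add: mult.commute)
      then have "B*m > B*(n-1)" using mm kbig by linarith
      then have "m > n - 1" using B1 by simp
      then have "m \<ge> n" using n2 by simp
      then have "B*m \<ge> B*n" by (rule mult_left_mono) simp
      moreover have "n*B = B*n" by (simp add: mult.commute)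
      ultimately show ?thesis using mm compl by linarith
    qed
    then have "k*rb b n + a*N \<in> S_a a b n" using mem_suff[OF b2] y_def B_def by simp
    then show "x \<in> S_a a b n" using kN r_def by simp
  qed
  then show ?thesis unfolding F_def r_def B_def by simp
qed

lemma case2: fixes a b n :: nat
  assumes b2: "b \<ge> 2" and n2: "n \<ge> 2" and a0: "a > 0" and g: "gcd (rb b n) a = 1"
    and agt: "a > (b-1)*rb b n"
  shows "frobenius (S_a a b n) = int ((b-1)*rb b n + a*(rb b n - 1))"
proof -
  define r where "r = rb b n"
  define B where "B = b - 1"
  have B1: "B \<ge> 1" using b2 B_def by simp
  have bn: "b^n = B*r + 1" using rb_pow[of b n] b2 unfolding r_def B_def by simp
  have rge: "2*n \<le> r + 2" using rb_ge[OF b2] r_def by simp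
  have rn: "r \<ge> n" using rge n2 by linarith
  have g': "gcd r a = 1" using g r_def by simp
  have agt': "a > B*r" using agt B_def r_def by simp
  have nB: "n*B \<ge> B + B" using n2 by (metis mult_2 mult_le_mono1)
  define F where "F = B*r + a*(r - 1)"
  have "frobenius (S_a a b n) = int F"
  proof (rule frob_char)
    show "F \<notin> S_a a b n"
    proof
      assume "F \<in> S_a a b n"
      then obtain k N where kN: "F = k*rb b n + a*N" "ds b ((b-1)*N + k) \<le> k"
        using mem_nec[OF b2] by blast
      have kN': "F = k*r + a*N" "ds b (B*N + k) \<le> k" using kN r_def B_def by auto
      have "B*r + a*(r-1) = k*r + a*N" using kN'(1) F_def by simp
      moreover have "r - 1 < r" using rn n2 by linarith
      ultimately obtain j where j: "N = (r-1) + j*r" "k + a*j = B"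
        using low[OF g'] by blast
      have j0: "j = 0"
      proof (rule ccontr)
        assume "j \<noteq> 0"
        then have "a*j \<ge> a" by simp
        moreover have "B*r \<ge> B" using rn n2 by simp
        ultimately show False using j(2) agt' by linarith
      qed
      have "B*N + k = B*(r-1) + B*1" using j j0 by simp
      also have "\<dots> = B*(r-1+1)" by (simp only: distrib_left)
      also have "r - 1 + 1 = r" using rn n2 by linarith
      finally have "B*N + k = b^n - 1 - 0" using bn by simp
      then have "ds b (B*N+k) + ds b 0 = n*(b-1)" using ds_compl[OF b2, of 0 n] by simp
      then have "ds b (B*N+k) = n*B" using B_def by simp
      then show False using kN'(2) j j0 nB B1 by linarith
    qed
  next
    fix x assume x: "x > F"
    have "x \<ge> a*(r-1)" using x F_def by simp
    moreover have "r > 0" using rn n2 by simp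
    ultimately obtain k N where kN: "N < r" "x = k*r + a*N" using up[OF g' a0] by blast
    define M where "M = r - 1 - N"
    have rM: "r - 1 = N + M" using kN(1) M_def by simp
    have "k*r + a*N > B*r + a*(N + M)" using x kN(2) rM F_def by simp
    then have i1: "k*r > B*r + a*M" by (simp add: distrib_left)
    have "a*M \<ge> (B*r)*M" using agt' by (intro mult_right_mono) auto
    moreover have "(B*r)*M = (B*M)*r" by (simp add: ac_simps)
    ultimately have "k*r > B*r + (B*M)*r" using i1 by linarith
    then have "k*r > (B + B*M)*r" by (simp add: distrib_right)
    then have kgt: "k > B + B*M" by (simp only: mult_less_cancel2)
    define y where "y = B*N + k"
    have "B*N + (B + B*M) = B*(N + M + 1)" by (simp add: distrib_left)
    also have "N + M + 1 = r" using rM rn n2 by linarith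
    finally have "y \<ge> b^n" using kgt bn y_def by linarith
    then have "ds b y \<le> k" using lemU[OF b2, of N r n "y" k] kN bn B_def y_def by simp
    then have "k*rb b n + a*N \<in> S_a a b n" using mem_suff[OF b2] y_def B_def by simp
    then show "x \<in> S_a a b n" using kN r_def by simp
  qed
  then show ?thesis unfolding F_def r_def B_def by simp
qed

theorem theorem22:
  fixes a b n :: nat
  assumes "a > 0" and "b > 1" and "n > 1" and "gcd (rb b n) a = 1"
  shows "(a < b ^ n - 1 \<longrightarrow>
           frobenius (S_a a b n) = (int n - 1) * (int b ^ n - 1 - int a) + int a * int (rb b n))
       \<and> (a > b ^ n - 1 \<longrightarrow>
           frobenius (S_a a b n) = int b ^ n - 1 - int a + int a * int (rb b n))"
proof -
  have b2: "b \<ge> 2" and n2: "n \<ge> 2" using assms by auto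
  define r where "r = rb b n"
  define B where "B = b - 1"
  have bn: "b^n = B*r + 1" using rb_pow[of b n] b2 unfolding r_def B_def by simp
  have rge: "2*n \<le> r + 2" using rb_ge[OF b2] r_def by simp
  have rn: "r \<ge> n" using rge n2 by linarith
  have ibn: "int b ^ n = int B * int r + 1" using arg_cong[OF bn, of int] by simp
  have iB: "int (b - 1) = int B" using B_def by simp
  have bn1: "b^n - 1 = B*r" using bn by simp
  show ?thesis
  proof (intro conjI impI)
    assume "a < b^n - 1"
    then have "a < (b-1)*rb b n" using bn1 B_def r_def by simp
    then have "frobenius (S_a a b n) = int ((n-1)*(b-1)*rb b n + a*(rb b n - n + 1))"
      using case1[OF b2 n2 assms(1,4)] by simp
    also have "\<dots> = (int n - 1) * int B * int r + int a * (int r - int n + 1)"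
    proof -
      have e1: "int (n-1) = int n - 1" using n2 by simp
      have e2: "int (r - n + 1) = int r - int n + 1" using rn by simp
      define t where "t = r - n + 1"
      have e3: "int t = int r - int n + 1" using e2 t_def by simp
      have "int ((n-1)*(b-1)*rb b n + a*(rb b n - n + 1)) = int ((n-1)*(b-1)*r + a*t)" unfolding t_def r_def ..
      also have "\<dots> = int (n-1) * int (b-1) * int r + int a * int t" by simp
      finally show ?thesis unfolding e1 iB e3 r_def .
    qed
    also have "\<dots> = (int n - 1) * (int b ^ n - 1 - int a) + int a * int (rb b n)"
      unfolding ibn r_def[symmetric] by (simp add: algebra_simps)
    finally show "frobenius (S_a a b n) = (int n - 1) * (int b ^ n - 1 - int a) + int a * int (rb b n)" .
  next
    assume "a > b^n - 1"
    then have "a > (b-1)*rb b n" using bn1 B_def r_def by simp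
    then have "frobenius (S_a a b n) = int ((b-1)*rb b n + a*(rb b n - 1))"
      using case2[OF b2 n2 assms(1,4)] by simp
    also have "\<dots> = int B * int r + int a * (int r - 1)"
      using rn n2 unfolding r_def B_def by (simp add: of_nat_diff)
    also have "\<dots> = int b ^ n - 1 - int a + int a * int (rb b n)"
      unfolding ibn r_def[symmetric] by (simp add: algebra_simps)
    finally show "frobenius (S_a a b n) = int b ^ n - 1 - int a + int a * int (rb b n)" .
  qed
qed


end
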